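(* In the type $\mathbb A$ setting described in the context, for all $0\le i\le m-2$, $1\le k\le m-1-i$ and $0\le j\le i$ we have $$\mu_{(\mathbf x[i],B[i])}(x_k[i])=\frac{x_{k-1}[i]+x_{k+1}[i]}{x_k[i]}=\frac{x_{k-1+j}[i-j]+x_{k+1+j}[i-j]}{x_{k+j}[i-j]},$$ where $\mu_{(\mathbf y,C)}(y_k)$ denotes the $k$th entry of the first component of $\mu_k(\mathbf y,C)$.
   Context: Let $K$ be a field of characteristic $0$ or $K=\mathbb Z$, let $n\ge1$, $m=n+1$, $p=n$, and $\mathcal F=K(X_1,\dots,X_m)$. Let $B=(b_{ij})\in M_{m,n}(\mathbb Z)$ have $b_{i,i+1}=-1$ for $1\le i\le n-1$, $b_{i+1,i}=1$ for $1\le i\le n$, and all other entries $0$ (so the last row is $(0,\dots,0,1)$). Let $\mathbf x=(x_1,\dots,x_m)$ be algebraically independent over $K$ in $\mathcal F$. For $1\le k\le n$ the mutation $\mu_k(\mathbf y,C)=(\mathbf y',C')$ of a pair $(\mathbf y,C)$ is given by $c'_{ij}=-c_{ij}$ if $i=k$ or $j=k$, and $c'_{ij}=c_{ij}+\frac{|c_{ik}|c_{kj}+c_{ik}|c_{kj}|}{2}$ otherwise; $y'_s=y_s$ for $s\neq k$ and $y'_k=y_k^{-1}\big(\prod_{c_{ik}>0}y_i^{c_{ik}}+\prod_{c_{ik}<0}y_i^{-c_{ik}}\big)$. Set $(\mathbf x[0],B[0])=(\mathbf x,B)$ and, for $1\le i\le m-1$, $(\mathbf x[i],B[i])=\mu_{m-i}\cdots\mu_2\mu_1(\mathbf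 x[i-1],B[i-1])$ (apply $\mu_1$ first). Write $\mathbf x[i]=(x_1[i],\dots,x_m[i])$ and use the conventions $x_0[i]=1$, $x_{-1}[i]=0$ for all $i$. *)

theory Defs
  imports Main
begin

definition is_subfield :: "'a::field set \<Rightarrow> bool" where
  "is_subfield K \<longleftrightarrow> 0 \<in> K \<and> 1 \<in> K \<and>
     (\<forall>a\<in>K. \<forall>b\<in>K. a + b \<in> K \<and> a - b \<in> K \<and> a * b \<in> K) \<and>
     (\<forall>a\<in>K. inverse a \<in> K)"

text \<open>A polynomial is a finite set S of exponent
  vectors (supported in {1..m}) together with coefficients c.\<close>
definition alg_indep :: "'a::field set \<Rightarrow> nat \<Rightarrow> (nat \<Rightarrow> 'a) \<Rightarrow> bool" where
  "alg_indep K m x \<longleftrightarrow>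
     (\<forall>S c. finite S \<longrightarrow> (\<forall>\<alpha>\<in>S. \<forall>i. i \<notin> {1..m} \<longrightarrow> \<alpha> i = 0) \<longrightarrow>
        (\<forall>\<alpha>\<in>S. c \<alpha> \<in> K) \<longrightarrow>
        (\<Sum>\<alpha>\<in>S. c \<alpha> * (\<Prod>i\<in>{1..m}. x i ^ \<alpha> i)) = 0 \<longrightarrow>
        (\<forall>\<alpha>\<in>S. c \<alpha> = 0))"

type_synonym 'a seed = "(nat \<Rightarrow> 'a) \<times> (nat \<Rightarrow> nat \<Rightarrow> int)"

text \<open>Matrix mutation in direction k (entries indexed from 1).\<close>
definition mut_mat :: "nat \<Rightarrow> (nat \<Rightarrow> nat \<Rightarrow> int) \<Rightarrow> (nat \<Rightarrow> nat \<Rightarrow> int)" where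
  "mut_mat k C = (\<lambda>i j. if i = k \<or> j = k then - C i j
      else C i j + (\<bar>C i k\<bar> * C k j + C i k * \<bar>C k j\<bar>) div 2)"

text \<open>Seed mutation in direction k; m is the number of rows (cluster + frozen variables).\<close>
definition mut :: "nat \<Rightarrow> nat \<Rightarrow> 'a::field seed \<Rightarrow> 'a seed" where
  "mut m k s = (let y = fst s; C = snd s in
     (y(k := inverse (y k) *
        ((\<Prod>i\<in>{1..m}. if C i k > 0 then y i ^ nat (C i k) else 1) +
         (\<Prod>i\<in>{1..m}. if C i k < 0 then y i ^ nat (- C i k) else 1))),
      mut_mat k C))"

text \<open>The type A exchange matrix B (m = n+1 rows, n columns).\<close>
definition Bmat :: "nat \<Rightarrow> nat \<Rightarrow> nat \<Rightarrow> int" where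
  "Bmat n = (\<lambda>i j. if 1 \<le> i \<and> i \<le> n + 1 \<and> 1 \<le> j \<and> j \<le> n then
      (if i \<le> n - 1 \<and> j = i + 1 then -1 else if i = j + 1 then 1 else 0) else 0)"

text \<open>(x[i],B[i]): x[i] = mu_{m-i} ... mu_2 mu_1 (x[i-1],B[i-1]), mu_1 applied first.\<close>
fun seed_seq :: "nat \<Rightarrow> (nat \<Rightarrow> 'a::field) \<Rightarrow> nat \<Rightarrow> 'a seed" where
  "seed_seq n x 0 = (x, Bmat n)"
| "seed_seq n x (Suc i) = fold (mut (n + 1)) [1..<n + 1 - i] (seed_seq n x i)"

text \<open>x_k[i], with the convention x_0[i] = 1.\<close>
definition xv :: "nat \<Rightarrow> (nat \<Rightarrow> 'a::field) \<Rightarrow> nat \<Rightarrow> nat \<Rightarrow> 'a" where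
  "xv n x i k = (if k = 0 then 1 else fst (seed_seq n x i) k)"

end

theory Submission
  imports Defs
begin


datatype pe = PVar nat | POne | PAdd pe pe | PMul pe pe

fun peval :: "pe \<Rightarrow> (nat \<Rightarrow> 'b::comm_semiring_1) \<Rightarrow> 'b" where
  "peval (PVar i) y = y i"
| "peval POne y = 1"
| "peval (PAdd a b) y = peval a y + peval b y"
| "peval (PMul a b) y = peval a y * peval b y"

fun pvars :: "pe \<Rightarrow> nat set" where
  "pvars (PVar i) = {i}"
| "pvars POne = {}"
| "pvars (PAdd a b) = pvars a \<union> pvars b"
| "pvars (PMul a b) = pvars a \<union> pvars b"

fun psupp :: "pe \<Rightarrow> (nat \<Rightarrow> nat) set" where
  "psupp (PVar i) = {(\<lambda>j. if j = i then 1 else 0)}"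
| "psupp POne = {(\<lambda>j. 0)}"
| "psupp (PAdd a b) = psupp a \<union> psupp b"
| "psupp (PMul a b) = (\<lambda>(\<alpha>,\<beta>). \<lambda>i. \<alpha> i + \<beta> i) ` (psupp a \<times> psupp b)"

fun pcoef :: "pe \<Rightarrow> (nat \<Rightarrow> nat) \<Rightarrow> int" where
  "pcoef (PVar i) \<gamma> = (if \<gamma> = (\<lambda>j. if j = i then 1 else 0) then 1 else 0)"
| "pcoef POne \<gamma> = (if \<gamma> = (\<lambda>j. 0) then 1 else 0)"
| "pcoef (PAdd a b) \<gamma> = pcoef a \<gamma> + pcoef b \<gamma>"
| "pcoef (PMul a b) \<gamma> = (\<Sum>p\<in>{p\<in>psupp a \<times> psupp b. (\<lambda>i. fst p i + snd p i) = \<gamma>}. pcoef a (fst p) * pcoef b (snd p))"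

lemma psupp_finite: "finite (psupp e)"
  by (induction e) auto

lemma psupp_vars: "\<alpha> \<in> psupp e \<Longrightarrow> i \<notin> pvars e \<Longrightarrow> \<alpha> i = 0"
  by (induction e arbitrary: \<alpha>) auto

lemma pcoef_out: "\<alpha> \<notin> psupp e \<Longrightarrow> pcoef e \<alpha> = 0"
proof (induction e arbitrary: \<alpha>)
  case (PMul a b)
  have "{p\<in>psupp a \<times> psupp b. (\<lambda>i. fst p i + snd p i) = \<alpha>} = {}"
    using PMul.prems by force
  then show ?case by (simp only: pcoef.simps sum.empty)
qed auto

definition mon :: "nat \<Rightarrow> (nat \<Rightarrow> 'b::comm_semiring_1) \<Rightarrow> (nat \<Rightarrow> nat) \<Rightarrow> 'b" where
  "mon m y \<alpha> = (\<Prod>i\<in>{1..m}. y i ^ \<alpha> i)"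

lemma mon_add: "mon m y (\<lambda>i. \<alpha> i + \<beta> i) = mon m y \<alpha> * mon m y \<beta>"
  unfolding mon_def by (simp add: power_add prod.distrib)

lemma sum_extend:
  assumes "finite A" "finite B" "A \<subseteq> B" "\<forall>a\<in>B - A. f a = 0"
  shows "sum f A = sum f B"
  using assms by (metis sum.mono_neutral_left)

lemma prep:
  fixes y :: "nat \<Rightarrow> 'b::comm_ring_1"
  assumes "pvars e \<subseteq> {1..m}"
  shows "peval e y = (\<Sum>\<alpha>\<in>psupp e. of_int (pcoef e \<alpha>) * mon m y \<alpha>)"
  using assms
proof (induction e)
  case (PVar i)
  have "mon m y (\<lambda>j. if j = i then 1 else 0) = y i"
    using PVar unfolding mon_def by (simp add: power_0 prod.delta'[of "{1..m}"] if_distrib cong: if_cong)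
  then show ?case by simp
next
  case POne
  then show ?case by (simp add: mon_def)
next
  case (PAdd a b)
  let ?g = "\<lambda>e \<alpha>. of_int (pcoef e \<alpha>) * mon m y \<alpha>"
  have fa: "sum (?g a) (psupp a) = sum (?g a) (psupp a \<union> psupp b)"
    by (rule sum_extend) (auto simp: psupp_finite pcoef_out)
  have fb: "sum (?g b) (psupp b) = sum (?g b) (psupp a \<union> psupp b)"
    by (rule sum_extend) (auto simp: psupp_finite pcoef_out)
  show ?case using PAdd fa fb by (simp add: sum.distrib ring_distribs)
next
  case (PMul a b)
  let ?h = "\<lambda>p::(nat\<Rightarrow>nat)\<times>(nat\<Rightarrow>nat). (\<lambda>i. fst p i + snd p i)"
  let ?F = "\<lambda>p::(nat\<Rightarrow>nat)\<times>(nat\<Rightarrow>nat). of_int (pcoef a (fst p) * pcoef b (snd p)) * mon m y (?h p)"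
  have fin: "finite (psupp a \<times> psupp b)" by (simp add: psupp_finite)
  have "peval (PMul a b) y = (\<Sum>\<alpha>\<in>psupp a. of_int (pcoef a \<alpha>) * mon m y \<alpha>) * (\<Sum>\<beta>\<in>psupp b. of_int (pcoef b \<beta>) * mon m y \<beta>)"
    using PMul by simp
  also have "\<dots> = (\<Sum>p\<in>psupp a \<times> psupp b. ?F p)"
    by (simp add: sum_product sum.cartesian_product mon_add algebra_simps case_prod_beta')
  also have "\<dots> = (\<Sum>\<gamma>\<in>?h ` (psupp a \<times> psupp b). \<Sum>p\<in>{p\<in>psupp a \<times> psupp b. ?h p = \<gamma>}. ?F p)"
    by (rule sum.image_gen[OF fin])
  also have "\<dots> = (\<Sum>\<gamma>\<in>?h ` (psupp a \<times> psupp b). of_int (pcoef (PMul a b) \<gamma>) * mon m y \<gamma>)"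
  proof (rule sum.cong[OF refl])
    fix \<gamma> assume "\<gamma> \<in> ?h ` (psupp a \<times> psupp b)"
    have "(\<Sum>p\<in>{p\<in>psupp a \<times> psupp b. ?h p = \<gamma>}. ?F p)
        = (\<Sum>p\<in>{p\<in>psupp a \<times> psupp b. ?h p = \<gamma>}. of_int (pcoef a (fst p) * pcoef b (snd p)) * mon m y \<gamma>)"
      by (rule sum.cong) auto
    also have "\<dots> = of_int (pcoef (PMul a b) \<gamma>) * mon m y \<gamma>"
      by (simp add: sum_distrib_right of_int_sum)
    finally show "(\<Sum>p\<in>{p\<in>psupp a \<times> psupp b. ?h p = \<gamma>}. ?F p) = of_int (pcoef (PMul a b) \<gamma>) * mon m y \<gamma>" .
  qed
  also have "\<dots> = (\<Sum>\<gamma>\<in>psupp (PMul a b). of_int (pcoef (PMul a b) \<gamma>) * mon m y \<gamma>)"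
    by (simp add: case_prod_beta')
  finally show ?case .
qed

lemma peval_one_pos: "peval e (\<lambda>_. 1::int) \<ge> 1"
proof (induction e)
  case (PMul a b)
  have "(1::int) * 1 \<le> peval a (\<lambda>_. 1) * peval b (\<lambda>_. 1)"
    by (rule mult_mono) (use PMul in auto)
  then show ?case by simp
qed auto

lemma ofnat_in_K: "is_subfield (K::'a::field set) \<Longrightarrow> of_nat n \<in> K"
  by (induction n) (auto simp: is_subfield_def)

lemma ints_in_K:
  assumes "is_subfield (K::'a::field set) \<or> K = \<int>"
  shows "of_int c \<in> K"
  using assms
proof
  assume K: "is_subfield K"
  show ?thesis
  proof (cases c rule: int_cases)
    case (nonneg n)
    then show ?thesis using ofnat_in_K[OF K] by simp
  next
    case (neg n)
    then have "of_int c = (0::'a) - of_nat (Suc n)" by simp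
    moreover have "(0::'a) \<in> K" "of_nat (Suc n) \<in> K" using K ofnat_in_K[OF K] unfolding is_subfield_def by auto
    moreover have "\<forall>a\<in>K. \<forall>b\<in>K. a - b \<in> K" using K unfolding is_subfield_def by blast
    ultimately have "(0::'a) - of_nat (Suc n) \<in> K" by blast
    with \<open>of_int c = (0::'a) - of_nat (Suc n)\<close> show ?thesis by (simp only:)
  qed
qed simp

lemma peval_nz:
  fixes x :: "nat \<Rightarrow> 'a::field_char_0"
  assumes ai: "alg_indep K m x" and K: "is_subfield K \<or> K = \<int>" and v: "pvars e \<subseteq> {1..m}"
  shows "peval e x \<noteq> 0"
proof
  assume z: "peval e x = 0"
  have "(\<Sum>\<alpha>\<in>psupp e. of_int (pcoef e \<alpha>) * (\<Prod>i\<in>{1..m}. x i ^ \<alpha> i)) = 0"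
    using z prep[OF v, of x] by (simp add: mon_def)
  moreover have "\<forall>\<alpha>\<in>psupp e. \<forall>i. i \<notin> {1..m} \<longrightarrow> \<alpha> i = 0"
    using psupp_vars v by blast
  moreover have "\<forall>\<alpha>\<in>psupp e. (of_int (pcoef e \<alpha>)::'a) \<in> K" using ints_in_K[OF K] by blast
  moreover have "finite (psupp e)" by (rule psupp_finite)
  ultimately have "\<forall>\<alpha>\<in>psupp e. (of_int (pcoef e \<alpha>)::'a) = 0"
    using ai[unfolded alg_indep_def, rule_format, of "psupp e" "\<lambda>\<alpha>. of_int (pcoef e \<alpha>)"] by blast
  then have c0: "\<forall>\<alpha>\<in>psupp e. pcoef e \<alpha> = 0" by simp
  have "peval e (\<lambda>_. 1::int) = (\<Sum>\<alpha>\<in>psupp e. of_int (pcoef e \<alpha>) * mon m (\<lambda>_. 1::int) \<alpha>)"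
    by (rule prep[OF v])
  also have "\<dots> = 0" using c0 by simp
  finally show False using peval_one_pos[of e] by simp
qed



definition SF :: "nat \<Rightarrow> (nat \<Rightarrow> 'a::field) \<Rightarrow> 'a \<Rightarrow> bool" where
  "SF m x y \<longleftrightarrow> (\<exists>a b. pvars a \<subseteq> {1..m} \<and> pvars b \<subseteq> {1..m} \<and> y = peval a x / peval b x)"

definition NZ :: "nat \<Rightarrow> (nat \<Rightarrow> 'a::field) \<Rightarrow> bool" where
  "NZ m x \<longleftrightarrow> (\<forall>e. pvars e \<subseteq> {1..m} \<longrightarrow> peval e x \<noteq> 0)"

lemma SF_one: "SF m x 1"
  unfolding SF_def by (rule exI[of _ POne], rule exI[of _ POne]) simp

lemma SF_var: "i \<in> {1..m} \<Longrightarrow> SF m x (x i)"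
  unfolding SF_def by (rule exI[of _ "PVar i"], rule exI[of _ POne]) simp

lemma SF_mult: "SF m x u \<Longrightarrow> SF m x v \<Longrightarrow> SF m x (u * v)"
  unfolding SF_def
proof (elim exE conjE)
  fix a b c d assume h: "pvars a \<subseteq> {1..m}" "pvars b \<subseteq> {1..m}" "u = peval a x / peval b x"
    "pvars c \<subseteq> {1..m}" "pvars d \<subseteq> {1..m}" "v = peval c x / peval d x"
  show "\<exists>a b. pvars a \<subseteq> {1..m} \<and> pvars b \<subseteq> {1..m} \<and> u * v = peval a x / peval b x"
    by (rule exI[of _ "PMul a c"], rule exI[of _ "PMul b d"]) (use h in simp)
qed

lemma SF_inverse: "SF m x u \<Longrightarrow> SF m x (inverse u)"
  unfolding SF_def
proof (elim exE conjE)
  fix a b assume h: "pvars a \<subseteq> {1..m}" "pvars b \<subseteq> {1..m}" "u = peval a x / peval b x"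
  show "\<exists>a b. pvars a \<subseteq> {1..m} \<and> pvars b \<subseteq> {1..m} \<and> inverse u = peval a x / peval b x"
    by (rule exI[of _ b], rule exI[of _ a]) (use h in simp)
qed

lemma SF_add: "NZ m x \<Longrightarrow> SF m x u \<Longrightarrow> SF m x v \<Longrightarrow> SF m x (u + v)"
  unfolding SF_def
proof (elim exE conjE)
  fix a b c d assume nz: "NZ m x" and h: "pvars a \<subseteq> {1..m}" "pvars b \<subseteq> {1..m}" "u = peval a x / peval b x"
    "pvars c \<subseteq> {1..m}" "pvars d \<subseteq> {1..m}" "v = peval c x / peval d x"
  have "peval b x \<noteq> 0" "peval d x \<noteq> 0" using nz h unfolding NZ_def by auto
  then show "\<exists>a b. pvars a \<subseteq> {1..m} \<and> pvars b \<subseteq> {1..m} \<and> u + v = peval a x / peval b x"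
    by (intro exI[of _ "PAdd (PMul a d) (PMul c b)"] exI[of _ "PMul b d"]) (use h in \<open>simp add: add_frac_eq\<close>)
qed

lemma SF_nz: "NZ m x \<Longrightarrow> SF m x u \<Longrightarrow> u \<noteq> 0"
  unfolding SF_def NZ_def by auto

lemma SF_power: "SF m x u \<Longrightarrow> SF m x (u ^ k)"
  by (induction k) (auto intro: SF_one SF_mult)

lemma SF_prod: "finite A \<Longrightarrow> (\<And>i. i \<in> A \<Longrightarrow> SF m x (f i)) \<Longrightarrow> SF m x (prod f A)"
  by (induction A rule: finite_induct) (auto intro: SF_one SF_mult)

definition SFall :: "nat \<Rightarrow> (nat \<Rightarrow> 'a::field) \<Rightarrow> (nat \<Rightarrow> 'a) \<Rightarrow> bool" where
  "SFall m x y \<longleftrightarrow> (\<forall>p\<in>{1..m}. SF m x (y p))"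

lemma SFall_mut: assumes "NZ m x" "SFall m x (fst s)" shows "SFall m x (fst (mut m k s))"
proof -
  obtain y C where s: "s = (y, C)" by (cases s)
  have y: "\<And>p. p \<in> {1..m} \<Longrightarrow> SF m x (y p)" using assms(2) s by (simp add: SFall_def)
  have f: "SF m x (if b then y i ^ e else 1)" if "i \<in> {1..m}" for b i e
    using y[OF that] by (auto intro: SF_one SF_power)
  have "SF m x (inverse (y k) *
        ((\<Prod>i\<in>{1..m}. if C i k > 0 then y i ^ nat (C i k) else 1) +
         (\<Prod>i\<in>{1..m}. if C i k < 0 then y i ^ nat (- C i k) else 1)))" if "k \<in> {1..m}"
    by (intro SF_mult SF_inverse SF_add[OF assms(1)] SF_prod y that f) auto
  moreover have "fst (mut m k s) = y(k := inverse (y k) *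
        ((\<Prod>i\<in>{1..m}. if C i k > 0 then y i ^ nat (C i k) else 1) +
         (\<Prod>i\<in>{1..m}. if C i k < 0 then y i ^ nat (- C i k) else 1)))"
    by (simp add: s mut_def Let_def)
  ultimately show ?thesis unfolding SFall_def
  proof (intro ballI)
    fix p assume p: "p \<in> {1..m}"
    assume a1: "k \<in> {1..m} \<Longrightarrow> SF m x (inverse (y k) *
        ((\<Prod>i\<in>{1..m}. if C i k > 0 then y i ^ nat (C i k) else 1) +
         (\<Prod>i\<in>{1..m}. if C i k < 0 then y i ^ nat (- C i k) else 1)))"
    assume a2: "fst (mut m k s) = y(k := inverse (y k) *
        ((\<Prod>i\<in>{1..m}. if C i k > 0 then y i ^ nat (C i k) else 1) +
         (\<Prod>i\<in>{1..m}. if C i k < 0 then y i ^ nat (- C i k) else 1)))"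
    show "SF m x (fst (mut m k s) p)"
    proof (cases "p = k")
      case True then show ?thesis using a1 a2 p by simp
    next
      case False then show ?thesis using a2 y[OF p] by simp
    qed
  qed
qed

lemma SFall_fold: "NZ m x \<Longrightarrow> SFall m x (fst s) \<Longrightarrow> SFall m x (fst (fold (mut m) ks s))"
proof (induction ks arbitrary: s)
  case (Cons k ks)
  show ?case using Cons.IH[OF Cons.prems(1) SFall_mut[OF Cons.prems]] by simp
qed simp

lemma SFall_seed: "NZ (n+1) x \<Longrightarrow> SFall (n+1) x (fst (seed_seq n x i))"
proof (induction i)
  case 0
  then show ?case by (auto simp: SFall_def intro: SF_var)
next
  case (Suc i)
  have "seed_seq n x (Suc i) = fold (mut (n + 1)) [1..<n + 1 - i] (seed_seq n x i)" by simp
  then show ?case by (simp only:) (rule SFall_fold[OF Suc.prems Suc.IH[OF Suc.prems]])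
qed

lemma NZ_from:
  fixes x :: "nat \<Rightarrow> 'a::field_char_0"
  assumes "alg_indep K m x" "is_subfield K \<or> K = \<int>" shows "NZ m x"
  using peval_nz[OF assms] unfolding NZ_def by blast



definition sg :: "bool \<Rightarrow> int" where "sg b = (if b then 1 else -1)"

definition PM :: "nat \<Rightarrow> (nat \<Rightarrow> bool) \<Rightarrow> nat \<Rightarrow> nat \<Rightarrow> int" where
  "PM n s = (\<lambda>i j. if 1 \<le> i \<and> i \<le> n + 1 \<and> 1 \<le> j \<and> j \<le> n then
      (if i = j + 1 then sg (s j) else if j = i + 1 then - sg (s i) else 0) else 0)"

lemma Bmat_PM: "Bmat n = PM n (\<lambda>c. c \<le> n)"
  unfolding Bmat_def PM_def sg_def by (intro ext) auto

lemma PM_cong: "(\<And>c. c \<ge> 1 \<Longrightarrow> s c = s' c) \<Longrightarrow> PM n s = PM n s'"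
  unfolding PM_def by (intro ext) auto

lemma PM_col: "1 \<le> k \<Longrightarrow> k \<le> n \<Longrightarrow>
  PM n s i k = (if i = k + 1 then sg (s k) else if i + 1 = k \<and> k \<ge> 2 then - sg (s i) else 0)"
  unfolding PM_def by auto

lemma PM_row: "1 \<le> k \<Longrightarrow> k \<le> n \<Longrightarrow>
  PM n s k j = (if k = j + 1 \<and> j \<ge> 1 then sg (s j) else if j = k + 1 \<and> j \<le> n then - sg (s k) else 0)"
  unfolding PM_def by auto

lemma abs_sg[simp]: "\<bar>sg b\<bar> = 1" by (simp add: sg_def)
lemma sg_not[simp]: "sg (\<not> b) = - sg b" by (simp add: sg_def)

lemma mutPM:
  assumes k: "1 \<le> k" "k \<le> n" and c: "k = 1 \<or> s (k - 1) \<noteq> s k"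
  shows "mut_mat k (PM n s) = PM n (s(k - 1 := \<not> s (k - 1), k := \<not> s k))"
proof (intro ext)
  fix i j
  let ?s' = "s(k - 1 := \<not> s (k - 1), k := \<not> s k)"
  show "mut_mat k (PM n s) i j = PM n ?s' i j"
  proof (cases "i = k \<or> j = k")
    case True
    then show ?thesis using k unfolding mut_mat_def PM_def by auto
  next
    case False
    have corr: "(\<bar>PM n s i k\<bar> * PM n s k j + PM n s i k * \<bar>PM n s k j\<bar>) div 2 = 0"
    proof (cases "PM n s i k = 0 \<or> PM n s k j = 0")
      case True then show ?thesis by auto
    next
      case nz: False
      then have i: "i = k + 1 \<or> (i + 1 = k \<and> k \<ge> 2)" using PM_col[OF k, of s i] by (auto split: if_splits)
      have j: "(j + 1 = k \<and> j \<ge> 1) \<or> (j = k + 1 \<and> j \<le> n)" using nz PM_row[OF k, of s j] by (auto split: if_splits)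
      show ?thesis
      proof (cases "i = j")
        case True
        then show ?thesis using i j PM_col[OF k, of s i] PM_row[OF k, of s j] by (auto simp: sg_def)
      next
        case ne: False
      have ij: "(i = k + 1 \<and> j + 1 = k \<and> k \<ge> 2) \<or> (i + 1 = k \<and> j = k + 1 \<and> k \<ge> 2)" using i j ne by auto
      have ck: "s (k - 1) \<noteq> s k" using ij c by auto
      show ?thesis
      proof (cases "i = k + 1")
        case True
        then have "j = k - 1" "k \<ge> 2" using ij by auto
        then show ?thesis using True PM_col[OF k, of s i] PM_row[OF k, of s j] ck by (auto simp: sg_def)
      next
        case F: False
        then have "i = k - 1" "j = k + 1" "k \<ge> 2" using ij by auto
        then show ?thesis using F PM_col[OF k, of s i] PM_row[OF k, of s j] ck by (auto simp: sg_def)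
      qed
      qed
    qed
    have "PM n s i j = PM n ?s' i j"
      using False unfolding PM_def by auto
    then show ?thesis using False corr unfolding mut_mat_def by simp
  qed
qed

lemma mut_other: "q \<noteq> k \<Longrightarrow> fst (mut m k s) q = fst s q"
  by (simp add: mut_def Let_def)

lemma mut_snd: "snd (mut m k s) = mut_mat k (snd s)"
  by (simp add: mut_def Let_def)

lemma mut_k: "fst (mut m k (y, C)) k = inverse (y k) *
        ((\<Prod>i\<in>{1..m}. if C i k > 0 then y i ^ nat (C i k) else 1) +
         (\<Prod>i\<in>{1..m}. if C i k < 0 then y i ^ nat (- C i k) else 1))"
  by (simp add: mut_def Let_def)

lemma prod_nb:
  fixes k n :: nat and f :: "nat \<Rightarrow> 'b::comm_monoid_mult"
  assumes "1 \<le> k" "k \<le> n" "\<And>i. i \<in> {1..n+1} \<Longrightarrow> i \<noteq> k + 1 \<Longrightarrow> \<not> (i + 1 = k \<and> k \<ge> 2) \<Longrightarrow> f i = 1"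
  shows "prod f {1..n+1} = f (k + 1) * (if k \<ge> 2 then f (k - 1) else (1::'b::comm_monoid_mult))"
proof -
  have o: "\<forall>i\<in>{1..n+1} - ({k+1} \<union> (if k \<ge> 2 then {k-1} else {})). f i = 1"
  proof
    fix i assume i: "i \<in> {1..n+1} - ({k+1} \<union> (if k \<ge> 2 then {k-1} else {}))"
    then have "i \<in> {1..n+1}" "i \<noteq> k + 1" "\<not> (i + 1 = k \<and> k \<ge> 2)" by (auto split: if_splits)
    then show "f i = 1" using assms(3) by blast
  qed
  have "prod f {1..n+1} = prod f ({k+1} \<union> (if k \<ge> 2 then {k-1} else {}))"
    by (rule prod.mono_neutral_right) (use assms o in auto)
  then show ?thesis by (cases "k \<ge> 2") (auto simp: mult.commute)
qed

lemma mutA: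
  fixes y :: "nat \<Rightarrow> 'a::field"
  assumes k: "1 \<le> k" "k \<le> n" and sk: "s k" and c: "k = 1 \<or> \<not> s (k - 1)"
  shows "fst (mut (n + 1) k (y, PM n s)) k = inverse (y k) * ((if k \<ge> 2 then y (k - 1) else 1) * y (k + 1) + 1)"
proof -
  have p1: "(\<Prod>i\<in>{1..n+1}. if PM n s i k > 0 then y i ^ nat (PM n s i k) else 1)
      = y (k + 1) * (if k \<ge> 2 then y (k - 1) else 1)"
    by (subst prod_nb[OF k]) (use k sk c in \<open>auto simp: PM_col sg_def\<close>)
  have p2: "(\<Prod>i\<in>{1..n+1}. if PM n s i k < 0 then y i ^ nat (- PM n s i k) else 1) = 1"
    by (subst prod_nb[OF k]) (use k sk c in \<open>auto simp: PM_col sg_def\<close>)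
  show ?thesis by (simp only: mut_k p1 p2) (simp add: mult.commute)
qed

lemma mutB:
  fixes y :: "nat \<Rightarrow> 'a::field"
  assumes k: "1 \<le> k" "k \<le> n" and sk: "s k" and c: "k = 1 \<or> s (k - 1)"
  shows "fst (mut (n + 1) k (y, PM n s)) k = inverse (y k) * (y (k + 1) + (if k \<ge> 2 then y (k - 1) else 1))"
proof -
  have p1: "(\<Prod>i\<in>{1..n+1}. if PM n s i k > 0 then y i ^ nat (PM n s i k) else 1)
      = y (k + 1) * 1"
    by (subst prod_nb[OF k]) (use k sk c in \<open>auto simp: PM_col sg_def\<close>)
  have p2: "(\<Prod>i\<in>{1..n+1}. if PM n s i k < 0 then y i ^ nat (- PM n s i k) else 1) = 1 * (if k \<ge> 2 then y (k - 1) else 1)"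
    by (subst prod_nb[OF k]) (use k sk c in \<open>auto simp: PM_col sg_def\<close>)
  show ?thesis by (simp only: mut_k p1 p2) simp
qed

definition tt :: "nat \<Rightarrow> nat \<Rightarrow> nat \<Rightarrow> bool" where
  "tt N p c = (if c = p \<and> p \<ge> 1 then False else c \<le> N)"

lemma fold_Suc: "fold (mut m) [1..<Suc p + 1] s0 = mut m (p + 1) (fold (mut m) [1..<p + 1] s0)"
  by simp

lemma fold_inv:
  fixes s0 :: "'a::field seed"
  assumes nz: "NZ (n+1) x" and sf: "SFall (n+1) x (fst s0)" and m0: "snd s0 = PM n (\<lambda>c. c \<le> N)"
    and N: "N \<le> n"
  shows "p \<le> N \<Longrightarrow> snd (fold (mut (n+1)) [1..<p+1] s0) = PM n (tt N p)
     \<and> (\<forall>q>p. fst (fold (mut (n+1)) [1..<p+1] s0) q = fst s0 q)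
     \<and> (\<forall>q. 1 \<le> q \<and> q \<le> p \<longrightarrow> fst (fold (mut (n+1)) [1..<p+1] s0) q * fst s0 q
           = (if q = 1 then 1 else fst (fold (mut (n+1)) [1..<p+1] s0) (q - 1)) * fst s0 (q + 1) + 1)"
proof (induction p)
  case 0
  have "tt N 0 = (\<lambda>c. c \<le> N)" by (rule ext) (simp add: tt_def)
  then show ?case using m0 by simp
next
  case (Suc p)
  define S where "S = fold (mut (n+1)) [1..<p+1] s0"
  define y where "y = fst S"
  have IH: "snd S = PM n (tt N p)" "\<forall>q>p. y q = fst s0 q"
     "\<forall>q. 1 \<le> q \<and> q \<le> p \<longrightarrow> y q * fst s0 q = (if q = 1 then 1 else y (q - 1)) * fst s0 (q + 1) + 1"
    using Suc S_def y_def by auto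
  have Sy: "S = (y, PM n (tt N p))" using IH(1) y_def by (metis prod.collapse)
  have new: "fold (mut (n+1)) [1..<Suc p+1] s0 = mut (n+1) (p+1) S" unfolding S_def by simp
  have k: "1 \<le> p + 1" "p + 1 \<le> n" using Suc N by auto
  have t1: "tt N p (p + 1)" using Suc by (simp add: tt_def)
  have t2: "p + 1 = 1 \<or> \<not> tt N p (p + 1 - 1)" by (simp add: tt_def)
  have mat: "snd (mut (n+1) (p+1) S) = PM n (tt N (Suc p))"
  proof -
    have "snd (mut (n+1) (p+1) S) = mut_mat (p+1) (PM n (tt N p))" by (simp add: mut_snd Sy)
    also have "\<dots> = PM n ((tt N p)(p + 1 - 1 := \<not> tt N p (p + 1 - 1), p + 1 := \<not> tt N p (p + 1)))"
      by (rule mutPM[OF k]) (use t1 t2 in auto)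
    also have "\<dots> = PM n (tt N (Suc p))"
      by (rule PM_cong) (use Suc in \<open>auto simp: tt_def\<close>)
    finally show ?thesis .
  qed
  have val: "fst (mut (n+1) (p+1) S) (p+1) = inverse (y (p+1)) * ((if p + 1 \<ge> 2 then y (p + 1 - 1) else 1) * y (p + 1 + 1) + 1)"
    unfolding Sy by (rule mutA[OF k]) (use t1 t2 in auto)
  have u1: "y (p+1) = fst s0 (p+1)" "y (p+2) = fst s0 (p+2)" using IH(2) by auto
  have unz: "fst s0 (p+1) \<noteq> 0"
    using SF_nz[OF nz] sf k unfolding SFall_def by auto
  have oth: "\<And>q. q \<noteq> p + 1 \<Longrightarrow> fst (mut (n+1) (p+1) S) q = y q" using mut_other y_def by metis
  show ?case unfolding new
  proof (intro conjI allI impI)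
    show "snd (mut (n+1) (p+1) S) = PM n (tt N (Suc p))" by (rule mat)
  next
    fix q assume "Suc p < q"
    then show "fst (mut (n+1) (p+1) S) q = fst s0 q" using oth IH(2) by auto
  next
    fix q assume q: "1 \<le> q \<and> q \<le> Suc p"
    show "fst (mut (n+1) (p+1) S) q * fst s0 q
           = (if q = 1 then 1 else fst (mut (n+1) (p+1) S) (q - 1)) * fst s0 (q + 1) + 1"
    proof (cases "q = p + 1")
      case True
      have "fst (mut (n+1) (p+1) S) q * fst s0 q = ((if p + 1 \<ge> 2 then y p else 1) * fst s0 (p + 2) + 1)"
        using True val u1 unz by simp
      moreover have "(if q = 1 then 1 else fst (mut (n+1) (p+1) S) (q - 1)) = (if p + 1 \<ge> 2 then y p else 1)"
        using True oth[of p] by auto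
      ultimately show ?thesis using True by (simp add: add.commute)
    next
      case False
      then have "q \<le> p" using q by auto
      have e1: "fst (mut (n+1) (p+1) S) q = y q" using oth False by blast
      have e2: "fst (mut (n+1) (p+1) S) (q - 1) = y (q - 1)" using oth \<open>q \<le> p\<close> by simp
      show ?thesis unfolding e1 e2 using IH(3) q \<open>q \<le> p\<close> by blast
    qed
  qed
qed

lemma upt_eq: "[1..<n + 1 - i] = [1..<(n - i) + 1]"
proof (cases "i \<le> n")
  case True
  then have "n + 1 - i = n - i + 1" by simp
  then show ?thesis by (simp only:)
next
  case False
  then show ?thesis by simp
qed

lemma seed_mat: "NZ (n+1) x \<Longrightarrow> snd (seed_seq n x i) = PM n (\<lambda>c. c \<le> n - i)"
proof (induction i)
  case 0
  then show ?case by (simp add: Bmat_PM)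
next
  case (Suc i)
  have "snd (seed_seq n x (Suc i)) = snd (fold (mut (n + 1)) [1..<(n - i) + 1] (seed_seq n x i))"
    by (simp only: seed_seq.simps upt_eq)
  also have "\<dots> = PM n (tt (n - i) (n - i))"
    using fold_inv[OF Suc.prems SFall_seed[OF Suc.prems] Suc.IH[OF Suc.prems], of "n - i"] by simp
  also have "\<dots> = PM n (\<lambda>c. c \<le> n - Suc i)"
    by (rule PM_cong) (auto simp: tt_def)
  finally show ?case .
qed

lemma xv_nz: "NZ (n+1) x \<Longrightarrow> 1 \<le> q \<Longrightarrow> q \<le> n + 1 \<Longrightarrow> xv n x i q \<noteq> 0"
  using SFall_seed[of n x i] SF_nz[of "n+1" x] unfolding SFall_def xv_def by auto

lemma recur:
  assumes nz: "NZ (n+1) x" and q: "1 \<le> q" "q \<le> n - i"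
  shows "xv n x (Suc i) q * xv n x i q = xv n x (Suc i) (q - 1) * xv n x i (q + 1) + 1"
proof -
  have e: "seed_seq n x (Suc i) = fold (mut (n + 1)) [1..<(n - i) + 1] (seed_seq n x i)"
    by (simp only: seed_seq.simps upt_eq)
  have "fst (seed_seq n x (Suc i)) q * fst (seed_seq n x i) q
     = (if q = 1 then 1 else fst (seed_seq n x (Suc i)) (q - 1)) * fst (seed_seq n x i) (q + 1) + 1"
    using fold_inv[OF nz SFall_seed[OF nz] seed_mat[OF nz, of i], where p = "n - i"] q unfolding e by auto
  then show ?thesis using q unfolding xv_def by auto
qed

lemma step:
  assumes nz: "NZ (n+1) x" and k: "1 \<le> k" "k + 1 \<le> n - i"
  shows "(xv n x (Suc i) (k - 1) + xv n x (Suc i) (k + 1)) / xv n x (Suc i) k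
       = (xv n x i k + xv n x i (k + 2)) / xv n x i (k + 1)"
proof -
  have r1: "xv n x (Suc i) k * xv n x i k = xv n x (Suc i) (k - 1) * xv n x i (k + 1) + 1"
    using recur[OF nz, of k i] k by auto
  have r2: "xv n x (Suc i) (k+1) * xv n x i (k+1) = xv n x (Suc i) k * xv n x i (k + 2) + 1"
    using recur[OF nz, of "k+1" i] k by auto
  have n1: "xv n x (Suc i) k \<noteq> 0" using xv_nz[OF nz] k by auto
  have n2: "xv n x i (k + 1) \<noteq> 0" using xv_nz[OF nz] k by auto
  have "(xv n x (Suc i) (k - 1) + xv n x (Suc i) (k + 1)) * xv n x i (k + 1)
      = (xv n x i k + xv n x i (k + 2)) * xv n x (Suc i) k"
    using r1 r2 by (simp add: algebra_simps)
  then show ?thesis using n1 n2 by (simp add: frac_eq_eq)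
qed

lemma chain:
  assumes nz: "NZ (n+1) x" and k: "1 \<le> k" "k \<le> n - i"
  shows "j \<le> i \<Longrightarrow> (xv n x i (k - 1) + xv n x i (k + 1)) / xv n x i k
           = (xv n x (i - j) (k - 1 + j) + xv n x (i - j) (k + 1 + j)) / xv n x (i - j) (k + j)"
proof (induction j)
  case 0
  then show ?case by simp
next
  case (Suc j)
  have st: "(xv n x (Suc (i - Suc j)) (k + j - 1) + xv n x (Suc (i - Suc j)) (k + j + 1)) / xv n x (Suc (i - Suc j)) (k + j)
       = (xv n x (i - Suc j) (k + j) + xv n x (i - Suc j) (k + j + 2)) / xv n x (i - Suc j) (k + j + 1)"
    by (rule step[OF nz]) (use k Suc.prems in auto)
  have e: "Suc (i - Suc j) = i - j" using Suc.prems by auto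
  have "k - 1 + j = k + j - 1" "k - 1 + Suc j = k + j" "k + 1 + Suc j = k + j + 2" "k + 1 + j = k + j + 1"
    "k + Suc j = k + j + 1" using k by auto
  then show ?case using Suc.IH Suc.prems st e by simp
qed


theorem lemma7p1:
  fixes K :: "'a::field_char_0 set" and x :: "nat \<Rightarrow> 'a" and n i k j :: nat
  assumes "n \<ge> 1"
    and "is_subfield K \<or> K = \<int>"
    and "alg_indep K (n + 1) x"
    and "i \<le> (n + 1) - 2" and "1 \<le> k" and "k \<le> (n + 1) - 1 - i" and "j \<le> i"
  shows "fst (mut (n + 1) k (seed_seq n x i)) k
           = (xv n x i (k - 1) + xv n x i (k + 1)) / xv n x i k
       \<and> (xv n x i (k - 1) + xv n x i (k + 1)) / xv n x i k
           = (xv n x (i - j) (k - 1 + j) + xv n x (i - j) (k + 1 + j)) / xv n x (i - j) (k + j)"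
proof
  have nz: "NZ (n+1) x" by (rule NZ_from[OF assms(3) assms(2)])
  have kk: "1 \<le> k" "k \<le> n - i" using assms by auto
  define y where "y = fst (seed_seq n x i)"
  have sd: "seed_seq n x i = (y, PM n (\<lambda>c. c \<le> n - i))"
    using seed_mat[OF nz, of i] y_def by (metis prod.collapse)
  have "fst (mut (n + 1) k (seed_seq n x i)) k = inverse (y k) * (y (k + 1) + (if k \<ge> 2 then y (k - 1) else 1))"
    unfolding sd by (rule mutB) (use kk in auto)
  moreover have "xv n x i k = y k" "xv n x i (k + 1) = y (k + 1)"
    "xv n x i (k - 1) = (if k \<ge> 2 then y (k - 1) else 1)"
    using kk unfolding xv_def y_def by auto
  ultimately show "fst (mut (n + 1) k (seed_seq n x i)) k
           = (xv n x i (k - 1) + xv n x i (k + 1)) / xv n x i k"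
    by (simp add: divide_inverse mult.commute add.commute)
  show "(xv n x i (k - 1) + xv n x i (k + 1)) / xv n x i k
           = (xv n x (i - j) (k - 1 + j) + xv n x (i - j) (k + 1 + j)) / xv n x (i - j) (k + j)"
    by (rule chain[OF nz kk assms(7)])
qed

end
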